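(* Let $t$ and $\Delta_s$ be positive integers and let $G$ be an undirected graph. There exists a $(t\cdot\Delta_s,\Delta_s)$-dissolution for $G$ if and only if $G$ has a $t$-star partition.
   Context: For $V'\subseteq V(G)$ let $Z(V',G):=\{(x,y)\mid x\in V',\ y\in V(G)\setminus V',\ \{x,y\}\in E(G)\}$. For positive integers $s,\Delta_s$, an $(s,\Delta_s)$-dissolution for $G$ is a pair $(D,z)$ with $D\subset V(G)$ and $z\colon Z(D,G)\to\{0,\dots,s\}$ such that (a) each $v'\in D$ satisfies $\sum_{(v',v)\in Z(D,G)} z(v',v)=s$, and (b) each $v\in V(G)\setminus D$ satisfies $\sum_{(v',v)\in Z(D,G)} z(v',v)=\Delta_s$. A $t$-star $K_{1,t}$ is the graph with vertices $v_1,\dots,v_{t+1}$ and edges $\{v_1,v_i\}$, $2\le i\le t+1$. A $t$-star partition of $G$ is a partition of $V(G)$ into sets $V_1,\dots,V_{|V(G)|/(t+1)}$ of size $t+1$ such that each induced subgraph $G[V_i]$ contains a $t$-star as a subgraph. *)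

theory Defs
  imports Main "HOL-Library.Disjoint_Sets"
begin

definition graph :: "'a set \<Rightarrow> 'a set set \<Rightarrow> bool" where
  "graph V E \<longleftrightarrow> finite V \<and> (\<forall>e\<in>E. \<exists>x y. e = {x, y} \<and> x \<noteq> y \<and> x \<in> V \<and> y \<in> V)"

definition Z :: "'a set \<Rightarrow> 'a set \<Rightarrow> 'a set set \<Rightarrow> ('a \<times> 'a) set" where
  "Z V' V E = {(x, y). x \<in> V' \<and> y \<in> V - V' \<and> {x, y} \<in> E}"

definition dissolution :: "'a set \<Rightarrow> 'a set set \<Rightarrow> nat \<Rightarrow> nat \<Rightarrow> 'a set \<Rightarrow> ('a \<Rightarrow> 'a \<Rightarrow> nat) \<Rightarrow> bool" where
  "dissolution V E s \<Delta> D z \<longleftrightarrow>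
     D \<subseteq> V \<and>
     (\<forall>(x, y) \<in> Z D V E. z x y \<le> s) \<and>
     (\<forall>v' \<in> D. (\<Sum>v \<in> {v. (v', v) \<in> Z D V E}. z v' v) = s) \<and>
     (\<forall>v \<in> V - D. (\<Sum>v' \<in> {v'. (v', v) \<in> Z D V E}. z v' v) = \<Delta>)"

definition has_dissolution :: "'a set \<Rightarrow> 'a set set \<Rightarrow> nat \<Rightarrow> nat \<Rightarrow> bool" where
  "has_dissolution V E s \<Delta> \<longleftrightarrow> (\<exists>D z. dissolution V E s \<Delta> D z)"

definition contains_star :: "'a set set \<Rightarrow> nat \<Rightarrow> 'a set \<Rightarrow> bool" where
  "contains_star E t W \<longleftrightarrow> card W = t + 1 \<and> (\<exists>c \<in> W. \<forall>w \<in> W - {c}. {c, w} \<in> E)"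

definition star_partition :: "'a set \<Rightarrow> 'a set set \<Rightarrow> nat \<Rightarrow> 'a set set \<Rightarrow> bool" where
  "star_partition V E t P \<longleftrightarrow> partition_on V P \<and> (\<forall>W \<in> P. contains_star E t W)"

definition has_star_partition :: "'a set \<Rightarrow> 'a set set \<Rightarrow> nat \<Rightarrow> bool" where
  "has_star_partition V E t \<longleftrightarrow> (\<exists>P. star_partition V E t P)"

end

theory Submission imports Defs begin

lemma sum_if_zero: "finite Y \<Longrightarrow> sum (\<lambda>a. if a \<in> X then 0 else (c a::nat)) Y = sum c (Y - X)"
  by (simp add: sum.If_cases Diff_eq)

lemma sum_dec: "finite X \<Longrightarrow> sum c X \<le> sum (c(a := c a - 1)) X + (1::nat)"
proof -
  assume f: "finite X"
  show ?thesis
  proof (cases "a \<in> X")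
    case True
    have "sum c X = c a + sum c (X - {a})" using f True by (simp add: sum.remove)
    moreover have "sum (c(a := c a - 1)) X = (c a - 1) + sum (c(a := c a - 1)) (X - {a})" using f True by (simp add: sum.remove)
    moreover have "sum (c(a := c a - 1)) (X - {a}) = sum c (X - {a})" by (rule sum.cong) auto
    ultimately show ?thesis by simp
  next
    case False
    then have "sum (c(a := c a - 1)) X = sum c X" by (intro sum.cong) auto
    then show ?thesis by simp
  qed
qed

lemma hall_cap:
  fixes A :: "'a set" and adj :: "'a \<Rightarrow> 'b \<Rightarrow> bool"
  assumes "finite A"
  shows "finite B \<Longrightarrow> (\<forall>S\<subseteq>B. card S \<le> sum (c::'a\<Rightarrow>nat) {a\<in>A. \<exists>b\<in>S. adj a b}) \<Longrightarrow>
    \<exists>f. (\<forall>b\<in>B. f b \<in> A \<and> adj (f b) b) \<and> (\<forall>a. card {b\<in>B. f b = a} \<le> c a)"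
proof (induction "card B" arbitrary: B c rule: less_induct)
  case less
  note fB = less.prems(1) and H = less.prems(2)
  define N where "N S = {a\<in>A. \<exists>b\<in>S. adj a b}" for S
  have finN: "finite (N S)" for S using assms unfolding N_def by auto
  have HN: "\<forall>S\<subseteq>B. card S \<le> sum c (N S)" using H unfolding N_def by blast
  have IH: "\<exists>f. (\<forall>b\<in>B'. f b \<in> A \<and> adj (f b) b) \<and> (\<forall>a. card {b\<in>B'. f b = a} \<le> c' a)"
    if "card B' < card B" "finite B'" "\<forall>S\<subseteq>B'. card S \<le> sum c' {a\<in>A. \<exists>b\<in>S. adj a b}" for B' c'
    using less.hyps[OF that(1) that(2) that(3)] .
  show ?case
  proof (cases "\<exists>S. S \<noteq> {} \<and> S \<subset> B \<and> card S = sum c (N S)")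
    case True
    then obtain S where S: "S \<noteq> {}" "S \<subset> B" "card S = sum c (N S)" by blast
    have fS: "finite S" using S fB finite_subset by blast
    have "card S < card B" using psubset_card_mono[OF fB S(2)] .
    moreover have "\<forall>T\<subseteq>S. card T \<le> sum c {a\<in>A. \<exists>b\<in>T. adj a b}" using H S by blast
    ultimately obtain f1 where f1: "\<forall>b\<in>S. f1 b \<in> A \<and> adj (f1 b) b" "\<forall>a. card {b\<in>S. f1 b = a} \<le> c a"
      using IH fS by blast
    define c' where "c' a = (if a \<in> N S then 0 else c a)" for a
    have "B - S \<subset> B" using S by blast
    then have "card (B - S) < card B" using fB by (rule psubset_card_mono[rotated])
    moreover have "\<forall>T\<subseteq>B - S. card T \<le> sum c' {a\<in>A. \<exists>b\<in>T. adj a b}"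
    proof (intro allI impI)
      fix T assume T: "T \<subseteq> B - S"
      have fT: "finite T" using T fB finite_subset by blast
      have "card T + card S = card (T \<union> S)" using T fS fT by (subst card_Un_disjoint) auto
      also have "\<dots> \<le> sum c (N (T \<union> S))" using HN[rule_format, of "T \<union> S"] T S(2) by blast
      also have "N (T \<union> S) = N S \<union> (N T - N S)" unfolding N_def by auto
      also have "sum c (N S \<union> (N T - N S)) = sum c (N S) + sum c (N T - N S)"
        using finN by (subst sum.union_disjoint) auto
      finally have "card T \<le> sum c (N T - N S)" using S by simp
      also have "sum c (N T - N S) = sum c' (N T)" unfolding c'_def using finN by (simp add: sum_if_zero)
      finally show "card T \<le> sum c' {a\<in>A. \<exists>b\<in>T. adj a b}" unfolding N_def .
    qed
    ultimately obtain f2 where f2: "\<forall>b\<in>B-S. f2 b \<in> A \<and> adj (f2 b) b" "\<forall>a. card {b\<in>B-S. f2 b = a} \<le> c' a"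
      using IH fB by blast
    define f where "f b = (if b \<in> S then f1 b else f2 b)" for b
    have "\<forall>b\<in>B. f b \<in> A \<and> adj (f b) b" using f1 f2 unfolding f_def by auto
    moreover have "card {b\<in>B. f b = a} \<le> c a" for a
    proof (cases "a \<in> N S")
      case True
      have "finite {b\<in>B-S. f2 b = a}" using fB by auto
      then have e: "{b\<in>B-S. f2 b = a} = {}" using f2(2)[rule_format, of a] True unfolding c'_def by simp
      have "{b\<in>B. f b = a} = {b\<in>S. f1 b = a}" using e S unfolding f_def by auto
      then show ?thesis using f1 by simp
    next
      case False
      have "{b\<in>B. f b = a} = {b\<in>B-S. f2 b = a}" using False f1(1) S unfolding f_def N_def by auto
      then show ?thesis using f2(2)[rule_format, of a] False unfolding c'_def by simp
    qed
    ultimately show ?thesis by blast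
  next
    case False
    have strict: "card S < sum c (N S)" if "S \<noteq> {}" "S \<subset> B" for S
    proof -
      have "card S \<le> sum c (N S)" using HN that(2) by blast
      moreover have "card S \<noteq> sum c (N S)" using False that by blast
      ultimately show ?thesis by simp
    qed
    show ?thesis
    proof (cases "B = {}")
      case True then show ?thesis by auto
    next
      case False
      then obtain b where b: "b \<in> B" by blast
      have "card {b} \<le> sum c (N {b})" using HN b by blast
      then have "sum c (N {b}) \<noteq> 0" by simp
      then obtain a where a0: "a \<in> N {b}" "c a \<noteq> 0"
        by (metis sum.neutral)
      then have a: "a \<in> N {b}" "c a > 0" by auto
      define c' where "c' = c(a := c a - 1)"
      have "card (B - {b}) < card B" by (rule card_Diff1_less[OF fB b])
      moreover have "\<forall>T\<subseteq>B - {b}. card T \<le> sum c' {a\<in>A. \<exists>b\<in>T. adj a b}"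
      proof (intro allI impI)
        fix T assume T: "T \<subseteq> B - {b}"
        show "card T \<le> sum c' {a\<in>A. \<exists>b\<in>T. adj a b}"
        proof (cases "T = {}")
          case True then show ?thesis by simp
        next
          case False
          have "T \<subset> B" using T b by auto
          then have "card T < sum c (N T)" using strict False by blast
          also have "\<dots> \<le> sum c' (N T) + 1" unfolding c'_def using finN by (rule sum_dec)
          finally show ?thesis unfolding N_def by simp
        qed
      qed
      ultimately obtain f' where f': "\<forall>x\<in>B-{b}. f' x \<in> A \<and> adj (f' x) x" "\<forall>a. card {x\<in>B-{b}. f' x = a} \<le> c' a"
        using IH fB by blast
      define f where "f = f'(b := a)"
      have "\<forall>x\<in>B. f x \<in> A \<and> adj (f x) x" using f'(1) a(1) unfolding f_def N_def by auto
      moreover have "card {x\<in>B. f x = a'} \<le> c a'" for a'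
      proof (cases "a' = a")
        case True
        have "{x\<in>B. f x = a'} = insert b {x\<in>B-{b}. f' x = a}" using True b unfolding f_def by auto
        moreover have "finite {x\<in>B-{b}. f' x = a}" using fB by auto
        ultimately have "card {x\<in>B. f x = a'} \<le> card {x\<in>B-{b}. f' x = a} + 1"
          by (simp add: card_insert_if)
        then show ?thesis using f'(2)[rule_format, of a] True a(2) unfolding c'_def by simp
      next
        case False
        have "{x\<in>B. f x = a'} = {x\<in>B-{b}. f' x = a'}" using False unfolding f_def by auto
        then show ?thesis using f'(2)[rule_format, of a'] False unfolding c'_def by simp
      qed
      ultimately show ?thesis by blast
    qed
  qed
qed
lemma diss_to_part:
  fixes V :: "'a set" and E :: "'a set set" and t \<Delta> :: nat
  assumes G: "graph V E" and t: "t > 0" and d: "\<Delta> > 0"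
    and dis: "dissolution V E (t * \<Delta>) \<Delta> D z"
  shows "has_star_partition V E t"
proof -
  have fV: "finite V" using G unfolding graph_def by simp
  have DV: "D \<subseteq> V" and
    outs: "\<forall>v' \<in> D. (\<Sum>v \<in> {v. (v', v) \<in> Z D V E}. z v' v) = t * \<Delta>" and
    ins: "\<forall>v \<in> V - D. (\<Sum>v' \<in> {v'. (v', v) \<in> Z D V E}. z v' v) = \<Delta>"
    using dis unfolding dissolution_def by auto
  define B where "B = V - D"
  have fD: "finite D" using fV DV finite_subset by blast
  have fB: "finite B" using fV unfolding B_def by simp
  define zz where "zz a b = (if (a, b) \<in> Z D V E then z a b else 0)" for a b
  define adj where "adj a b = ((a, b) \<in> Z D V E \<and> z a b > 0)" for a b
  have L1: "(\<Sum>a\<in>D. zz a b) = \<Delta>" if b: "b \<in> B" for b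
  proof -
    have "(\<Sum>a\<in>D. zz a b) = (\<Sum>v' \<in> {v'. (v', b) \<in> Z D V E}. zz v' b)"
      by (rule sum.mono_neutral_cong_right) (use fD in \<open>auto simp: zz_def Z_def\<close>)
    also have "\<dots> = (\<Sum>v' \<in> {v'. (v', b) \<in> Z D V E}. z v' b)"
      by (rule sum.cong) (auto simp: zz_def)
    finally show ?thesis using ins b unfolding B_def by simp
  qed
  have L2: "(\<Sum>b\<in>B. zz a b) = t * \<Delta>" if a: "a \<in> D" for a
  proof -
    have "(\<Sum>b\<in>B. zz a b) = (\<Sum>v \<in> {v. (a, v) \<in> Z D V E}. zz a v)"
      by (rule sum.mono_neutral_cong_right) (use fB in \<open>auto simp: zz_def Z_def B_def\<close>)
    also have "\<dots> = (\<Sum>v \<in> {v. (a, v) \<in> Z D V E}. z a v)"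
      by (rule sum.cong) (auto simp: zz_def)
    finally show ?thesis using outs a by simp
  qed
  have hallc: "\<forall>S\<subseteq>B. card S \<le> sum (\<lambda>_. t) {a\<in>D. \<exists>b\<in>S. adj a b}"
  proof (intro allI impI)
    fix S assume S: "S \<subseteq> B"
    define NS where "NS = {a\<in>D. \<exists>b\<in>S. adj a b}"
    have fS: "finite S" using S fB finite_subset by blast
    have fNS: "finite NS" using fD unfolding NS_def by (simp add: mult.commute)
    have "(\<Sum>b\<in>S. \<Sum>a\<in>D. zz a b) = (\<Sum>b\<in>S. \<Delta>)" using L1 S by (intro sum.cong) auto
    then have "\<Delta> * card S = (\<Sum>b\<in>S. \<Sum>a\<in>D. zz a b)" by simp
    also have "\<dots> = (\<Sum>b\<in>S. \<Sum>a\<in>NS. zz a b)"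
    proof (rule sum.cong[OF refl])
      fix b assume b: "b \<in> S"
      show "(\<Sum>a\<in>D. zz a b) = (\<Sum>a\<in>NS. zz a b)"
        by (rule sum.mono_neutral_cong_right) (use fD b in \<open>auto simp: NS_def adj_def zz_def\<close>)
    qed
    also have "\<dots> = (\<Sum>a\<in>NS. \<Sum>b\<in>S. zz a b)" by (rule sum.swap)
    also have "\<dots> \<le> (\<Sum>a\<in>NS. \<Sum>b\<in>B. zz a b)"
      by (rule sum_mono, rule sum_mono2) (use fB S in auto)
    also have "\<dots> = (\<Sum>a\<in>NS. t * \<Delta>)" using L2 by (auto simp: NS_def)
    also have "\<dots> = \<Delta> * (t * card NS)" by simp
    finally have "card S \<le> t * card NS" using d by simp
    then show "card S \<le> sum (\<lambda>_. t) {a\<in>D. \<exists>b\<in>S. adj a b}" unfolding NS_def by (simp add: mult.commute)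
  qed
  obtain f where f: "\<forall>b\<in>B. f b \<in> D \<and> adj (f b) b" "\<forall>a. card {b\<in>B. f b = a} \<le> t"
    using hall_cap[OF fD fB hallc] by blast
  have "card D * (t * \<Delta>) = (\<Sum>a\<in>D. \<Sum>b\<in>B. zz a b)" using L2 by simp
  also have "\<dots> = (\<Sum>b\<in>B. \<Sum>a\<in>D. zz a b)" by (rule sum.swap)
  also have "\<dots> = card B * \<Delta>" using L1 by simp
  finally have cB: "card B = t * card D" using d by (simp add: mult.commute)
  have "card B = (\<Sum>a\<in>D. card {b\<in>B. f b = a})"
    using sum.group[OF fB fD, of f "\<lambda>_. 1::nat"] f(1) by (simp add: image_subset_iff)
  then have sumeq: "(\<Sum>a\<in>D. card {b\<in>B. f b = a}) = (\<Sum>a\<in>D. t)" using cB by (simp add: mult.commute)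
  have exact: "card {b\<in>B. f b = a} = t" if a: "a \<in> D" for a
  proof (rule ccontr)
    assume "card {b\<in>B. f b = a} \<noteq> t"
    then have "card {b\<in>B. f b = a} < t" using f(2) le_neq_implies_less by blast
    then have "(\<Sum>a\<in>D. card {b\<in>B. f b = a}) < (\<Sum>a\<in>D. t)"
      using sum_strict_mono_ex1[OF fD, of "\<lambda>a. card {b\<in>B. f b = a}" "\<lambda>_. t"] f(2) a by blast
    then show False using sumeq by simp
  qed
  define blk where "blk a = insert a {b\<in>B. f b = a}" for a
  define P where "P = blk ` D"
  have edge: "{a, b} \<in> E" if "b \<in> B" "f b = a" for a b
    using f(1) that unfolding adj_def Z_def by auto
  have "partition_on V P"
  proof (rule partition_onI)
    show "\<Union> P = V"
    proof
      show "\<Union> P \<subseteq> V" using DV unfolding P_def blk_def B_def by auto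
      show "V \<subseteq> \<Union> P"
      proof
        fix v assume v: "v \<in> V"
        show "v \<in> \<Union> P"
        proof (cases "v \<in> D")
          case True then show ?thesis unfolding P_def blk_def by auto
        next
          case False then have "v \<in> B" using v B_def by simp
          then have "v \<in> blk (f v)" "f v \<in> D" using f(1) unfolding blk_def by auto
          then show ?thesis unfolding P_def by auto
        qed
      qed
    qed
    show "disjnt p q" if "p \<in> P" "q \<in> P" "p \<noteq> q" for p q
      using that unfolding P_def blk_def disjnt_def B_def by auto
    show "{} \<notin> P" unfolding P_def blk_def by auto
  qed
  moreover have "contains_star E t W" if W: "W \<in> P" for W
  proof -
    obtain a where a: "a \<in> D" "W = blk a" using W P_def by auto
    have "a \<notin> {b\<in>B. f b = a}" using a unfolding B_def by auto
    moreover have "finite {b\<in>B. f b = a}" using fB by simp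
    ultimately have "card W = t + 1" using exact[OF a(1)] a(2) unfolding blk_def by simp
    moreover have "\<forall>w \<in> W - {a}. {a, w} \<in> E" using a edge unfolding blk_def by auto
    moreover have "a \<in> W" using a blk_def by simp
    ultimately show ?thesis unfolding contains_star_def by blast
  qed
  ultimately show ?thesis unfolding has_star_partition_def star_partition_def by blast
qed


lemma part_to_diss:
  fixes V :: "'a set" and E :: "'a set set" and t \<Delta> :: nat
  assumes G: "graph V E" and t: "t > 0" and d: "\<Delta> > 0"
    and SP: "star_partition V E t P"
  shows "has_dissolution V E (t * \<Delta>) \<Delta>"
proof -
  have fV: "finite V" using G unfolding graph_def by simp
  have po: "partition_on V P" and cs: "\<forall>W\<in>P. contains_star E t W"
    using SP unfolding star_partition_def by auto
  have UP: "\<Union>P = V" using po unfolding partition_on_def by simp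
  have uniq: "W = W'" if "W \<in> P" "W' \<in> P" "x \<in> W" "x \<in> W'" for W W' x
    using po that unfolding partition_on_def disjoint_def by blast
  define cen where "cen W = (SOME c. c \<in> W \<and> (\<forall>w \<in> W - {c}. {c, w} \<in> E))" for W
  have cen: "cen W \<in> W \<and> (\<forall>w \<in> W - {cen W}. {cen W, w} \<in> E)" if "W \<in> P" for W
  proof -
    have "\<exists>c. c \<in> W \<and> (\<forall>w \<in> W - {c}. {c, w} \<in> E)" using cs that unfolding contains_star_def by blast
    then show ?thesis unfolding cen_def by (rule someI_ex)
  qed
  have cardW: "card W = t + 1" if "W \<in> P" for W using cs that unfolding contains_star_def by blast
  have WV: "W \<subseteq> V" if "W \<in> P" for W using UP that by blast
  define D where "D = cen ` P"
  define z where "z a b = (if \<exists>W\<in>P. a = cen W \<and> b \<in> W then \<Delta> else 0)" for a b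
  have DV: "D \<subseteq> V" using cen WV unfolding D_def by blast
  have zW: "z (cen W) b = (if b \<in> W then \<Delta> else 0)" if W: "W \<in> P" for W b
  proof -
    have "(\<exists>W'\<in>P. cen W = cen W' \<and> b \<in> W') \<longleftrightarrow> b \<in> W"
      using W cen uniq by metis
    then show ?thesis unfolding z_def by simp
  qed
  have notcen: "w \<notin> D" if "W \<in> P" "w \<in> W" "w \<noteq> cen W" for W w
    using that cen uniq unfolding D_def by blast
  have finZ1: "finite {v. (a, v) \<in> Z D V E}" for a
    by (rule finite_subset[OF _ fV]) (auto simp: Z_def)
  have finZ2: "finite {v. (v, a) \<in> Z D V E}" for a
    by (rule finite_subset[OF _ fV]) (use DV in \<open>auto simp: Z_def\<close>)
  have "dissolution V E (t * \<Delta>) \<Delta> D z"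
    unfolding dissolution_def
  proof (intro conjI)
    show "D \<subseteq> V" by (rule DV)
    show "\<forall>(x, y) \<in> Z D V E. z x y \<le> t * \<Delta>" using t by (auto simp: z_def)
    show "\<forall>v' \<in> D. (\<Sum>v \<in> {v. (v', v) \<in> Z D V E}. z v' v) = t * \<Delta>"
    proof
      fix v' assume "v' \<in> D"
      then obtain W where W: "W \<in> P" "v' = cen W" unfolding D_def by blast
      have eq: "{v. (v', v) \<in> Z D V E} \<inter> W = W - {v'}"
      proof
        show "{v. (v', v) \<in> Z D V E} \<inter> W \<subseteq> W - {v'}" using W cen unfolding Z_def D_def by auto
        show "W - {v'} \<subseteq> {v. (v', v) \<in> Z D V E} \<inter> W"
        proof
          fix w assume w: "w \<in> W - {v'}"
          have "w \<in> V - D" using w W notcen WV by blast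
          moreover have "{v', w} \<in> E" using cen W w by blast
          moreover have "v' \<in> D" using W D_def by blast
          ultimately show "w \<in> {v. (v', v) \<in> Z D V E} \<inter> W" using w unfolding Z_def by auto
        qed
      qed
      have "(\<Sum>v \<in> {v. (v', v) \<in> Z D V E}. z v' v) = (\<Sum>v \<in> {v. (v', v) \<in> Z D V E}. if v \<in> W then \<Delta> else 0)"
        using zW W by simp
      also have "\<dots> = \<Delta> * card ({v. (v', v) \<in> Z D V E} \<inter> W)"
        using finZ1 by (simp add: sum.If_cases)
      also have "\<dots> = \<Delta> * t" using eq cardW[OF W(1)] W cen
        by (metis card_Diff_singleton diff_add_inverse2)
      finally show "(\<Sum>v \<in> {v. (v', v) \<in> Z D V E}. z v' v) = t * \<Delta>" by simp
    qed
    show "\<forall>v \<in> V - D. (\<Sum>v' \<in> {v'. (v', v) \<in> Z D V E}. z v' v) = \<Delta>"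
    proof
      fix v assume v: "v \<in> V - D"
      then obtain W where W: "W \<in> P" "v \<in> W" using UP by blast
      have zz: "z v' v = (if v' = cen W then \<Delta> else 0)" for v'
        using W cen uniq unfolding z_def by metis
      have inn: "cen W \<in> {v'. (v', v) \<in> Z D V E}"
      proof -
        have "cen W \<noteq> v" using v W unfolding D_def by blast
        then have "{cen W, v} \<in> E" using cen W by blast
        then show ?thesis using v W unfolding Z_def D_def by auto
      qed
      have "(\<Sum>v' \<in> {v'. (v', v) \<in> Z D V E}. z v' v) = (\<Sum>v' \<in> {v'. (v', v) \<in> Z D V E}. if v' = cen W then \<Delta> else 0)"
        using zz by simp
      also have "\<dots> = \<Delta>" using inn finZ2 by simp
      finally show "(\<Sum>v' \<in> {v'. (v', v) \<in> Z D V E}. z v' v) = \<Delta>" .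
    qed
  qed
  then show ?thesis unfolding has_dissolution_def by blast
qed

theorem proposition1:
  fixes V :: "'a set" and E :: "'a set set" and t \<Delta> :: nat
  assumes "graph V E" and "t > 0" and "\<Delta> > 0"
  shows "has_dissolution V E (t * \<Delta>) \<Delta> \<longleftrightarrow> has_star_partition V E t"
  using diss_to_part[OF assms] part_to_diss[OF assms]
  unfolding has_dissolution_def has_star_partition_def by blast

end
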